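(* Let $\tau>0$. The function $$x\mapsto\Bigl(\sum_{n=-\infty}^\infty\operatorname{sech}\pi\bigl(\tfrac{2\pi}\tau n+x\bigr)\Bigr)^2-\Bigl(\sum_{n=-\infty}^\infty(-1)^n\operatorname{sech}\pi\bigl(\tfrac{2\pi}\tau n+x\bigr)\Bigr)^2$$ is constant on $\mathbb R$. *)

theory Defs
  imports "HOL-Analysis.Analysis"
begin

definition sech :: "real \<Rightarrow> real" where
  "sech x = 1 / cosh x"

end

theory Submission
  imports Defs
begin

lemma sech_pos: "0 < sech t" by (simp add: sech_def)
lemma sech_le1: "sech t \<le> 1" by (simp add: sech_def cosh_real_ge_1)

lemma cosh_ge_exp_abs: "exp \<bar>t\<bar> / 2 \<le> cosh (t::real)"
proof -
  have "cosh t = (exp t + exp (-t)) / 2" by (simp add: cosh_def)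
  then show ?thesis by (cases "t \<ge> 0") auto
qed

lemma sech_bound: "sech t \<le> 2 * exp (- \<bar>t\<bar>)"
proof -
  have "1 / cosh t \<le> 1 / (exp \<bar>t\<bar> / 2)"
    using cosh_ge_exp_abs[of t] by (intro divide_left_mono) auto
  then show ?thesis by (simp add: sech_def exp_minus field_simps)
qed

lemma real_summable_bound:
  fixes f g :: "'a \<Rightarrow> real"
  assumes "g summable_on A" "\<And>x. x \<in> A \<Longrightarrow> \<bar>f x\<bar> \<le> g x"
  shows "f summable_on A"
proof -
  have "(\<lambda>x. norm (f x)) summable_on A"
    by (rule Infinite_Sum.abs_summable_on_comparison_test'[of g A f]) (use assms in simp_all)
  then show ?thesis by (subst summable_on_iff_abs_summable_on_real) simp
qed

lemma int_summable:
  fixes g :: "int \<Rightarrow> real"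
  assumes "\<And>n. g n \<ge> 0" "summable (\<lambda>n. g (int n))" "summable (\<lambda>n. g (- int n))"
  shows "g summable_on UNIV"
proof -
  have "(g \<circ> int) summable_on UNIV"
    using assms(1,2) summable_on_UNIV_nonneg_real_iff[of "g \<circ> int"] by (auto simp: o_def)
  then have 1: "g summable_on range int"
    by (subst summable_on_reindex) auto
  have "(g \<circ> (\<lambda>n. - int n)) summable_on UNIV"
    using assms(1,3) summable_on_UNIV_nonneg_real_iff[of "g \<circ> (\<lambda>n. - int n)"] by (auto simp: o_def)
  then have 2: "g summable_on range (\<lambda>n. - int n)"
    by (subst summable_on_reindex) (auto simp: inj_on_def)
  have "UNIV = range int \<union> range (\<lambda>n. - int n)"
  proof (safe)
    fix x :: int assume "x \<notin> range (\<lambda>n. - int n)"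
    moreover have "x < 0 \<Longrightarrow> x = - int (nat (-x))" by simp
    ultimately have "x \<ge> 0" by (metis not_le rangeI)
    then have "x = int (nat x)" by simp
    then show "x \<in> range int" by (rule image_eqI) simp
  qed auto
  then show ?thesis using summable_on_union[OF 1 2] by simp
qed

lemma exp_summable:
  assumes "b > 0"
  shows "(\<lambda>n::int. exp (- b * \<bar>real_of_int n\<bar>)) summable_on UNIV"
proof (rule int_summable)
  have eq: "(\<lambda>n::nat. exp (- b * \<bar>real_of_int (int n)\<bar>)) = (\<lambda>n. exp (-b) ^ n)"
    by (auto simp: exp_of_nat_mult[symmetric] mult.commute)
  show "summable (\<lambda>n. exp (- b * \<bar>real_of_int (int n)\<bar>))"
    unfolding eq using assms by (intro summable_geometric) auto
  have eq2: "(\<lambda>n::nat. exp (- b * \<bar>real_of_int (- int n)\<bar>)) = (\<lambda>n. exp (-b) ^ n)"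
    by (auto simp: exp_of_nat_mult[symmetric] mult.commute)
  show "summable (\<lambda>n. exp (- b * \<bar>real_of_int (- int n)\<bar>))"
    unfolding eq2 using assms by (intro summable_geometric) auto
qed auto

lemma sech_summable:
  assumes "b > 0"
  shows "(\<lambda>n::int. sech (b * n + y)) summable_on UNIV"
proof -
  have "(\<lambda>n::int. (2 * exp \<bar>y\<bar>) * exp (- b * \<bar>real_of_int n\<bar>)) summable_on UNIV"
    using exp_summable[OF assms] by (rule summable_on_cmult_right)
  then show ?thesis
  proof (rule summable_on_comparison_test)
    fix n :: int
    show "0 \<le> sech (b * n + y)" using sech_pos less_imp_le by blast
    have "b * \<bar>real_of_int n\<bar> - \<bar>y\<bar> \<le> \<bar>b * n + y\<bar>"
      using assms by (auto simp: abs_mult)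
    then have "exp (- \<bar>b * n + y\<bar>) \<le> exp (\<bar>y\<bar>) * exp (- b * \<bar>real_of_int n\<bar>)"
      by (simp add: exp_add[symmetric])
    then show "sech (b * n + y) \<le> 2 * exp \<bar>y\<bar> * exp (- b * \<bar>real_of_int n\<bar>)"
      using sech_bound[of "b*n+y"] by linarith
  qed
qed

lemma lin_at_top: "c > 0 \<Longrightarrow> filterlim (\<lambda>n::nat. c * real n + y) at_top sequentially"
proof -
  assume c: "c > 0"
  have "filterlim (\<lambda>n::nat. y + c * real n) at_top sequentially"
    by (intro filterlim_tendsto_add_at_top[OF tendsto_const]
      filterlim_tendsto_pos_mult_at_top[OF tendsto_const c filterlim_real_sequentially])
  then show ?thesis by (simp add: add.commute)
qed

lemma tanh_tele:
  fixes c y :: real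
  assumes c: "c > 0"
  shows "((\<lambda>n::int. tanh (c * (n + 1) + y) - tanh (c * n + y)) has_sum 2) UNIV"
proof -
  define G where "G = (\<lambda>n::int. tanh (c * (n + 1) + y) - tanh (c * n + y))"
  have Gnn: "G n \<ge> 0" for n unfolding G_def using c by (simp add: algebra_simps)
  define f where "f = (\<lambda>n::nat. tanh (c * real n + y))"
  have "f \<longlonglongrightarrow> 1" unfolding f_def
    by (rule filterlim_compose[OF tanh_real_at_top lin_at_top[OF c]])
  from telescope_sums[OF this] have "(\<lambda>n. f (Suc n) - f n) sums (1 - tanh y)"
    by (simp add: f_def)
  moreover have "(\<lambda>n. f (Suc n) - f n) = G \<circ> int"
    by (auto simp: f_def G_def algebra_simps)
  ultimately have "((G \<circ> int) has_sum (1 - tanh y)) UNIV"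
    using Gnn by (intro sums_nonneg_imp_has_sum) auto
  then have 1: "(G has_sum (1 - tanh y)) (range int)"
    by (subst has_sum_reindex) auto
  define f' where "f' = (\<lambda>n::nat. - tanh (y - c * real n))"
  have "filterlim (\<lambda>n::nat. y - c * real n) at_bot sequentially"
    using lin_at_top[OF c, of "-y"] by (subst filterlim_uminus_at_bot) (simp add: algebra_simps)
  then have "(\<lambda>n. tanh (y - c * real n)) \<longlonglongrightarrow> -1"
    by (rule filterlim_compose[OF tanh_real_at_bot])
  then have "f' \<longlonglongrightarrow> 1" unfolding f'_def
    using tendsto_minus by fastforce
  from telescope_sums[OF this] have "(\<lambda>n. f' (Suc n) - f' n) sums (1 + tanh y)"
    by (simp add: f'_def)
  moreover have "(\<lambda>n. f' (Suc n) - f' n) = G \<circ> (\<lambda>n. - int n - 1)"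
    by (auto simp: f'_def G_def algebra_simps)
  ultimately have "((G \<circ> (\<lambda>n. - int n - 1)) has_sum (1 + tanh y)) UNIV"
    using Gnn by (intro sums_nonneg_imp_has_sum) auto
  then have 2: "(G has_sum (1 + tanh y)) (range (\<lambda>n. - int n - 1))"
    by (subst has_sum_reindex) (auto simp: inj_on_def)
  have "(G has_sum ((1 - tanh y) + (1 + tanh y))) (range int \<union> range (\<lambda>n. - int n - 1))"
    by (rule has_sum_Un_disjoint[OF 1 2]) auto
  moreover have "range int \<union> range (\<lambda>n. - int n - 1) = UNIV"
  proof (safe)
    fix x :: int assume "x \<notin> range (\<lambda>n. - int n - 1)"
    moreover have "x < 0 \<Longrightarrow> x = - int (nat (- x - 1)) - 1" by simp
    ultimately have "x \<ge> 0" by (metis not_le rangeI)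
    then have "x = int (nat x)" by simp
    then show "x \<in> range int" by (rule image_eqI) simp
  qed auto
  ultimately show ?thesis by (simp add: G_def)
qed

lemma has_sum_shift_int:
  fixes f :: "int \<Rightarrow> real"
  assumes "(f has_sum a) UNIV"
  shows "((\<lambda>n. f (n + d)) has_sum a) UNIV"
proof -
  have "bij_betw (\<lambda>n::int. n + d) UNIV UNIV"
    by (rule bij_betwI[where g="\<lambda>n. n - d"]) auto
  then show ?thesis using assms by (subst has_sum_reindex_bij_betw) auto
qed

lemma tanh_tele_nat:
  fixes c y :: real
  assumes c: "c > 0"
  shows "((\<lambda>n::int. tanh (c * (n + real k) + y) - tanh (c * n + y)) has_sum (2 * real k)) UNIV"
proof (induction k)
  case 0
  then show ?case by simp
next
  case (Suc k)
  have "((\<lambda>n::int. tanh (c * (real_of_int (n + 1) + real k) + y) - tanh (c * real_of_int (n + 1) + y)) has_sum (2 * real k)) UNIV"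
    using has_sum_shift_int[OF Suc.IH, of 1] by simp
  from has_sum_add[OF this tanh_tele[OF c, of y]]
  have *: "((\<lambda>n::int. (tanh (c * (real_of_int (n + 1) + real k) + y) - tanh (c * real_of_int (n + 1) + y))
       + (tanh (c * (real_of_int n + 1) + y) - tanh (c * real_of_int n + y))) has_sum (2 * real k + 2)) UNIV" .
  have e1: "c * (real_of_int (n + 1) + real k) + y = c * (real_of_int n + real (Suc k)) + y" for n
    by (simp add: algebra_simps)
  have e2: "c * real_of_int (n + 1) + y = c * (real_of_int n + 1) + y" for n
    by (simp add: algebra_simps)
  have "((\<lambda>n::int. tanh (c * (real_of_int n + real (Suc k)) + y) - tanh (c * real_of_int n + y)) has_sum (2 * real k + 2)) UNIV"
    using * unfolding e1 e2 by simp
  then show ?case by (simp only: of_nat_Suc distrib_left mult_1_right add.commute)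
qed

lemma has_sum_neg:
  fixes f :: "'a \<Rightarrow> real"
  shows "(f has_sum a) A \<Longrightarrow> ((\<lambda>x. - f x) has_sum (- a)) A"
  by (simp add: has_sum_uminus)

lemma tanh_tele_int:
  fixes c y :: real
  assumes c: "c > 0"
  shows "((\<lambda>n::int. tanh (c * (n + real_of_int k) + y) - tanh (c * n + y)) has_sum (2 * real_of_int k)) UNIV"
proof (cases "k \<ge> 0")
  case True
  then obtain j where "k = int j" using nonneg_int_cases by blast
  then show ?thesis using tanh_tele_nat[OF c, of j y] by simp
next
  case False
  then have "k = - int (nat (- k))" by simp
  then obtain j where j: "k = - int j" by blast
  have "((\<lambda>n::int. tanh (c * (real_of_int (n + k) + real j) + y) - tanh (c * real_of_int (n + k) + y)) has_sum (2 * real j)) UNIV"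
    using has_sum_shift_int[OF tanh_tele_nat[OF c, of j y], of k] by simp
  from has_sum_neg[OF this] have "((\<lambda>n::int. - (tanh (c * (real_of_int (n + k) + real j) + y) - tanh (c * real_of_int (n + k) + y))) has_sum (- (2 * real j))) UNIV"
    .
  note that_aux = this
  have e1: "c * (real_of_int (n + k) + real j) + y = c * real_of_int n + y" for n
    using j by (simp add: algebra_simps)
  have e2: "c * real_of_int (n + k) + y = c * (real_of_int n + real_of_int k) + y" for n
    by (simp add: algebra_simps)
  have "((\<lambda>n::int. tanh (c * (real_of_int n + real_of_int k) + y) - tanh (c * real_of_int n + y)) has_sum (- (2 * real j))) UNIV"
    using that_aux unfolding e1 e2 by simp
  then show ?thesis using j by simp
qed

lemma tanh_diff_sech: "tanh A - tanh B = sinh (A - B) * sech A * sech B"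
  by (simp add: tanh_def sech_def sinh_diff field_simps)

lemma has_sum_prod_nonneg:
  fixes f g :: "int \<Rightarrow> real"
  assumes f0: "\<And>m. f m \<ge> 0" and g0: "\<And>n. g n \<ge> 0"
  assumes F: "(f has_sum F) UNIV" and G: "(g has_sum G) UNIV"
  shows "((\<lambda>(m,n). f m * g n) has_sum (F * G)) (UNIV \<times> UNIV)"
proof -
  have inner: "((\<lambda>n. (\<lambda>(m,n). f m * g n) (m, n)) has_sum (f m * G)) UNIV" for m
    using has_sum_cmult_right[OF G, of "f m"] by simp
  have outer: "((\<lambda>m. f m * G) has_sum (F * G)) UNIV"
    using has_sum_cmult_left[OF F, of G] by simp
  have summ: "(\<lambda>(m,n). f m * g n) summable_on (UNIV \<times> UNIV)"
    by (rule summable_on_SigmaI[OF inner]) (use outer f0 g0 in \<open>auto simp: has_sum_imp_summable\<close>)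
  show ?thesis
    by (rule has_sum_SigmaI[OF inner outer summ])
qed

lemma powi_minus_one_real: "(-1::real) powi n = (if even n then 1 else -1)"
proof (cases "n \<ge> 0")
  case True
  then obtain k where "n = int k" using nonneg_int_cases by blast
  then show ?thesis by simp
next
  case False
  then have "n = - int (nat (- n))" by simp
  then obtain k where k: "n = - int k" by blast
  have "(-1::real) powi n = (-1) powi (int k)" unfolding k by (rule power_int_minus_one_minus)
  then show ?thesis using k by simp
qed

lemma even_odd_cover: "range (\<lambda>m::int. 2 * m) \<union> range (\<lambda>m. 2 * m + 1) = UNIV"
proof safe
  fix x :: int assume "x \<notin> range (\<lambda>m. 2 * m + 1)"
  moreover have "odd x \<Longrightarrow> x = 2 * (x div 2) + 1" by presburger
  ultimately have "even x" by (metis rangeI)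
  then have "x = 2 * (x div 2)" by simp
  then show "x \<in> range (\<lambda>m. 2 * m)" by (rule image_eqI) simp
qed auto

lemma split_even_odd:
  fixes u :: "int \<Rightarrow> real"
  assumes "((\<lambda>m. u (2 * m)) has_sum A) UNIV" "((\<lambda>m. u (2 * m + 1)) has_sum B) UNIV"
  shows "(u has_sum (A + B)) UNIV"
proof -
  have 1: "(u has_sum A) (range (\<lambda>m::int. 2 * m))"
    using assms(1) by (subst has_sum_reindex) (auto simp: inj_on_def o_def)
  have 2: "(u has_sum B) (range (\<lambda>m::int. 2 * m + 1))"
    using assms(2) by (subst has_sum_reindex) (auto simp: inj_on_def o_def)
  have "range (\<lambda>m::int. 2 * m) \<inter> range (\<lambda>m. 2 * m + 1) = {}" by auto presburger
  from has_sum_Un_disjoint[OF 1 2 this] show ?thesis by (simp add: even_odd_cover)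
qed

lemma main_identity:
  fixes a y :: real
  assumes a: "a > 0"
  shows "(\<Sum>\<^sub>\<infinity>n::int. sech (a * of_int n + y))\<^sup>2
    - (\<Sum>\<^sub>\<infinity>n::int. (-1) powi n * sech (a * of_int n + y))\<^sup>2
    = 4 * (\<Sum>\<^sub>\<infinity>k::int. (2 * of_int k - 1) / sinh (a * (2 * of_int k - 1)))"
proof -
  define e where "e = (\<lambda>m::int. sech (2 * a * of_int m + y))"
  define od where "od = (\<lambda>n::int. sech (2 * a * of_int n + (a + y)))"
  define Se where "Se = infsum e UNIV"
  define So where "So = infsum od UNIV"
  define c where "c = (\<lambda>k::int. 1 / sinh (a * (2 * of_int k - 1)))"
  have a2: "2 * a > 0" using a by simp
  have eE: "(e has_sum Se) UNIV" unfolding Se_def e_def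
    using sech_summable[OF a2, of y] by (rule has_sum_infsum)
  have odO: "(od has_sum So) UNIV" unfolding So_def od_def
    using sech_summable[OF a2, of "a + y"] by (rule has_sum_infsum)
  have e0: "e m \<ge> 0" for m unfolding e_def using sech_pos less_imp_le by blast
  have o0: "od m \<ge> 0" for m unfolding od_def using sech_pos less_imp_le by blast
  have P: "((\<lambda>(m,n). e m * od n) has_sum (Se * So)) (UNIV \<times> UNIV)"
    by (rule has_sum_prod_nonneg[OF e0 o0 eE odO])
  define Q where "Q = (\<lambda>(k::int,n::int). e (n + k) * od n)"
  have Q: "(Q has_sum (Se * So)) (UNIV \<times> UNIV)"
  proof -
    have "(Q has_sum (Se * So)) (UNIV \<times> UNIV) = ((\<lambda>(m,n). e m * od n) has_sum (Se * So)) (UNIV \<times> UNIV)"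
      by (rule has_sum_reindex_bij_witness[where i = "\<lambda>(m,n). (m - n, n)" and j = "\<lambda>(k,n). (n + k, n)"])
         (auto simp: Q_def)
    then show ?thesis using P by simp
  qed
  define D where "D = infsum (\<lambda>n::int. tanh (2 * a * of_int n + y) - tanh (2 * a * of_int n + (a + y))) UNIV"
  have Dsum: "((\<lambda>n::int. tanh (2 * a * of_int n + y) - tanh (2 * a * of_int n + (a + y))) has_sum D) UNIV"
  proof -
    have "(\<lambda>n::int. tanh (2 * a * of_int n + y) - tanh (2 * a * of_int n + (a + y))) summable_on UNIV"
    proof (rule real_summable_bound)
      show "(\<lambda>n. sinh a * e n) summable_on UNIV"
        using eE by (intro summable_on_cmult_right) (auto simp: has_sum_imp_summable)
      fix n :: int
      have "tanh (2 * a * of_int n + y) - tanh (2 * a * of_int n + (a + y))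
          = sinh (- a) * e n * od n"
        unfolding tanh_diff_sech e_def od_def by simp
      also have "\<bar>\<dots>\<bar> = sinh a * e n * od n"
        using e0[of n] o0[of n] a by (simp add: abs_mult)
      also have "\<dots> \<le> sinh a * e n * 1"
        using e0[of n] a sech_le1 unfolding od_def
        by (intro mult_left_mono) auto
      finally show "\<bar>tanh (2 * a * of_int n + y) - tanh (2 * a * of_int n + (a + y))\<bar> \<le> sinh a * e n"
        by simp
    qed
    then show ?thesis unfolding D_def by (rule has_sum_infsum)
  qed
  have inner: "((\<lambda>n. Q (k, n)) has_sum (c k * (2 * of_int k + D))) UNIV" for k
  proof -
    have T: "((\<lambda>n::int. tanh (2 * a * (of_int n + of_int k) + y) - tanh (2 * a * of_int n + y)) has_sum (2 * of_int k)) UNIV"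
      using tanh_tele_int[OF a2, of k y] .
    from has_sum_cmult_right[OF has_sum_add[OF T Dsum], of "c k"]
    have *: "((\<lambda>n. c k * ((tanh (2 * a * (of_int n + of_int k) + y) - tanh (2 * a * of_int n + y))
        + (tanh (2 * a * of_int n + y) - tanh (2 * a * of_int n + (a + y))))) has_sum (c k * (2 * of_int k + D))) UNIV" .
    have s0: "sinh (a * (2 * of_int k - 1)) \<noteq> 0"
    proof
      assume "sinh (a * (2 * of_int k - 1)) = 0"
      then have "2 * of_int k - 1 = (0::real)" using a by simp
      then have "2 * k = 1" by linarith
      then show False by presburger
    qed
    have eq: "c k * ((tanh (2 * a * (of_int n + of_int k) + y) - tanh (2 * a * of_int n + y))
        + (tanh (2 * a * of_int n + y) - tanh (2 * a * of_int n + (a + y)))) = Q (k, n)" for n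
    proof -
      have arg: "(2 * a * (of_int n + of_int k) + y) - (2 * a * of_int n + (a + y)) = a * (2 * of_int k - 1)"
        by (simp add: algebra_simps)
      have "c k * ((tanh (2 * a * (of_int n + of_int k) + y) - tanh (2 * a * of_int n + y))
        + (tanh (2 * a * of_int n + y) - tanh (2 * a * of_int n + (a + y))))
        = c k * (tanh (2 * a * (of_int n + of_int k) + y) - tanh (2 * a * of_int n + (a + y)))"
        by simp
      also have "\<dots> = c k * sinh (a * (2 * of_int k - 1)) * (sech (2 * a * (of_int n + of_int k) + y) * sech (2 * a * of_int n + (a + y)))"
        unfolding tanh_diff_sech arg by simp
      also have "\<dots> = sech (2 * a * (of_int n + of_int k) + y) * sech (2 * a * of_int n + (a + y))"
        using s0 by (simp add: c_def)
      also have "\<dots> = Q (k, n)"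
        by (simp add: Q_def e_def od_def)
      finally show ?thesis .
    qed
    show ?thesis using * unfolding eq .
  qed
  have outer: "((\<lambda>k. c k * (2 * of_int k + D)) has_sum (Se * So)) UNIV"
    by (rule has_sum_Sigma'[OF Q inner])
  have outer2: "((\<lambda>k. c (1 - k) * (2 * of_int (1 - k) + D)) has_sum (Se * So)) UNIV"
  proof -
    have "bij_betw (\<lambda>k::int. 1 - k) UNIV UNIV"
      by (rule bij_betwI[where g="\<lambda>k. 1 - k"]) auto
    then show ?thesis using outer by (subst has_sum_reindex_bij_betw) auto
  qed
  have cneg: "c (1 - k) = - c k" for k
  proof -
    have "a * (2 * of_int (1 - k) - 1) = - (a * (2 * of_int k - 1))" by (simp add: algebra_simps)
    then show ?thesis unfolding c_def by simp
  qed
  from has_sum_add[OF outer outer2]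
  have "((\<lambda>k. c k * (2 * of_int k + D) + c (1 - k) * (2 * of_int (1 - k) + D)) has_sum (Se * So + Se * So)) UNIV" .
  moreover have "c k * (2 * of_int k + D) + c (1 - k) * (2 * of_int (1 - k) + D)
      = 2 * ((2 * of_int k - 1) / sinh (a * (2 * of_int k - 1)))" for k
  proof -
    have "c k * (2 * of_int k + D) + c (1 - k) * (2 * of_int (1 - k) + D) = c k * (2 * (2 * of_int k - 1))"
      unfolding cneg by (simp add: algebra_simps)
    also have "\<dots> = 2 * ((2 * of_int k - 1) / sinh (a * (2 * of_int k - 1)))"
      by (simp add: c_def)
    finally show ?thesis .
  qed
  ultimately have "((\<lambda>k. 2 * ((2 * of_int k - 1) / sinh (a * (2 * of_int k - 1)))) has_sum (2 * (Se * So))) UNIV"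
    by simp
  note h2 = this
  have "((\<lambda>k::int. (2 * of_int k - 1) / sinh (a * (2 * of_int k - 1))) has_sum (Se * So)) UNIV"
    using h2 has_sum_cmult_right_iff[where c="2::real" and f="\<lambda>k::int. (2 * of_int k - 1) / sinh (a * (2 * of_int k - 1))" and S="2 * (Se * So)" and A=UNIV]
    by simp
  then have EO: "Se * So = (\<Sum>\<^sub>\<infinity>k::int. (2 * of_int k - 1) / sinh (a * (2 * of_int k - 1)))"
    by (simp add: infsumI)
  have S: "((\<lambda>n::int. sech (a * of_int n + y)) has_sum (Se + So)) UNIV"
  proof (rule split_even_odd)
    show "((\<lambda>m. sech (a * of_int (2 * m) + y)) has_sum Se) UNIV"
      using eE unfolding e_def by (simp add: algebra_simps)
    show "((\<lambda>m. sech (a * of_int (2 * m + 1) + y)) has_sum So) UNIV"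
      using odO unfolding od_def by (simp add: algebra_simps)
  qed
  have T: "((\<lambda>n::int. (-1) powi n * sech (a * of_int n + y)) has_sum (Se + - So)) UNIV"
  proof (rule split_even_odd)
    show "((\<lambda>m. (-1) powi (2 * m) * sech (a * of_int (2 * m) + y)) has_sum Se) UNIV"
      using eE unfolding e_def by (simp add: algebra_simps powi_minus_one_real)
    show "((\<lambda>m. (-1) powi (2 * m + 1) * sech (a * of_int (2 * m + 1) + y)) has_sum - So) UNIV"
      using has_sum_neg[OF odO] unfolding od_def by (simp add: algebra_simps powi_minus_one_real)
  qed
  have "(\<Sum>\<^sub>\<infinity>n::int. sech (a * of_int n + y))\<^sup>2
    - (\<Sum>\<^sub>\<infinity>n::int. (-1) powi n * sech (a * of_int n + y))\<^sup>2 = (Se + So)\<^sup>2 - (Se + - So)\<^sup>2"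
    using S T by (simp add: infsumI)
  also have "\<dots> = 4 * (Se * So)" by (simp add: power2_eq_square algebra_simps)
  finally show ?thesis unfolding EO .
qed

theorem lemmaB1:
  fixes \<tau> :: real
  assumes "\<tau> > 0"
  shows "\<exists>c. \<forall>x::real.
    (\<Sum>\<^sub>\<infinity>n::int. sech (pi * (2 * pi / \<tau> * of_int n + x)))\<^sup>2
    - (\<Sum>\<^sub>\<infinity>n::int. (-1) powi n * sech (pi * (2 * pi / \<tau> * of_int n + x)))\<^sup>2 = c"
proof -
  define a where "a = pi * (2 * pi / \<tau>)"
  have a: "a > 0" using assms by (simp add: a_def)
  have eq: "pi * (2 * pi / \<tau> * of_int n + x) = a * of_int n + pi * x" for n :: int and x :: real
    by (simp add: a_def algebra_simps)
  show ?thesis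
    by (rule exI[of _ "4 * (\<Sum>\<^sub>\<infinity>k::int. (2 * of_int k - 1) / sinh (a * (2 * of_int k - 1)))"])
       (simp only: eq main_identity[OF a] simp_thms)
qed

end
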